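(* Let $a,b>0$ with $ab<1$, let $\varphi\in\mathcal{B}_a$, $f\in\mathcal{B}_b$ and $\theta\ge0$. Then the function $g=\varphi(\Delta_\theta)f$ belongs to $\mathcal{B}_c$ with $c=b(1-ab)^{-1}$, and $$\|g\|_c\le(1-ab)^{-\theta}\|\varphi\|_a\|f\|_b.$$
   Context: For $b>0$ and entire $f$, $\|f\|_b=\sup_{k\in\mathbb{N}_0}b^{-k}|f^{(k)}(0)|$, and $\mathcal{B}_b=\{f \text{ entire}:\|f\|_b<\infty\}$. $\Delta_\theta$ is the operator $\Delta_\theta f=\theta f'+zf''$, and for entire $\varphi,f$, $\varphi(\Delta_\theta)f=\sum_{k=0}^\infty\sum_{m=0}^\infty\frac{\varphi^{(k)}(0)}{k!}\frac{f^{(m)}(0)}{m!}\Delta_\theta^kz^m$. *)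

theory Defs
  imports "HOL-Complex_Analysis.Complex_Analysis"
begin

definition entire :: "(complex \<Rightarrow> complex) \<Rightarrow> bool" where
  "entire f \<longleftrightarrow> f holomorphic_on UNIV"

definition Bseqw :: "real \<Rightarrow> (complex \<Rightarrow> complex) \<Rightarrow> nat \<Rightarrow> real" where
  "Bseqw b f k = inverse b ^ k * cmod ((deriv ^^ k) f 0)"

text \<open>The norm ||f||_b = sup_k b^(-k) |f^(k)(0)| (meaningful when the sequence is bounded).\<close>
definition Bnorm :: "real \<Rightarrow> (complex \<Rightarrow> complex) \<Rightarrow> real" where
  "Bnorm b f = (SUP k. Bseqw b f k)"

definition Bspace :: "real \<Rightarrow> (complex \<Rightarrow> complex) set" where
  "Bspace b = {f. entire f \<and> bdd_above (range (Bseqw b f))}"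

definition Delta :: "real \<Rightarrow> (complex \<Rightarrow> complex) \<Rightarrow> (complex \<Rightarrow> complex)" where
  "Delta \<theta> f = (\<lambda>z. of_real \<theta> * deriv f z + z * deriv (deriv f) z)"

definition funcalc :: "real \<Rightarrow> (complex \<Rightarrow> complex) \<Rightarrow> (complex \<Rightarrow> complex) \<Rightarrow> (complex \<Rightarrow> complex)" where
  "funcalc \<theta> \<phi> f = (\<lambda>z. \<Sum>k. \<Sum>m. ((deriv ^^ k) \<phi> 0 / fact k) * ((deriv ^^ m) f 0 / fact m)
       * ((Delta \<theta> ^^ k) (\<lambda>w. w ^ m)) z)"

end

theory Submission
  imports Defs
begin


lemma infsum_suminf_nat:
  fixes f :: "nat \<Rightarrow> 'a::banach"
  assumes "f summable_on UNIV" shows "infsum f UNIV = suminf f"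
  by (metis assms has_sum_imp_sums has_sum_infsum sums_unique)

lemma swap_suminf:
  fixes U :: "nat \<Rightarrow> nat \<Rightarrow> complex" and V :: "nat \<Rightarrow> nat \<Rightarrow> real"
  assumes UV: "\<And>k n. norm (U k n) \<le> V k n"
    and VW: "\<And>n. (\<lambda>k. V k n) sums W n" and W: "summable W"
  shows "(\<Sum>k. \<Sum>n. U k n) = (\<Sum>n. \<Sum>k. U k n)"
proof -
  have V0: "V k n \<ge> 0" for k n using UV[of k n] norm_ge_zero order_trans by blast
  have hs: "((\<lambda>k. V k n) has_sum W n) UNIV" for n
    using VW V0 by (intro sums_nonneg_imp_has_sum) auto
  have W0: "W n \<ge> 0" for n using VW[of n] V0 by (metis sums_unique suminf_nonneg sums_summable)
  have "W summable_on UNIV"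
    using W W0 summable_sums sums_nonneg_imp_has_sum summable_on_def by blast
  then have "(\<lambda>(n,k). V k n) summable_on Sigma UNIV (\<lambda>_. UNIV)"
    by (intro summable_on_SigmaI[where g=W]) (use hs V0 in auto)
  then have Vs: "(\<lambda>(n,k). V k n) summable_on UNIV \<times> UNIV" by simp
  have "(\<lambda>x. norm ((\<lambda>(n,k). U k n) x)) summable_on UNIV \<times> UNIV"
  proof (rule Infinite_Sum.abs_summable_on_comparison_test)
    show "(\<lambda>x. norm ((\<lambda>(n,k). V k n) x)) summable_on UNIV \<times> UNIV"
      using Vs V0 by (simp add: case_prod_unfold)
  qed (use UV V0 in \<open>auto simp: case_prod_unfold\<close>)
  then have Us: "(\<lambda>(n,k). U k n) summable_on UNIV \<times> UNIV"
    by (rule abs_summable_summable)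
  have Us2: "(\<lambda>(k,n). U k n) summable_on UNIV \<times> UNIV"
    using Us by (subst summable_on_swap) (simp add: case_prod_unfold)
  have i1: "(\<lambda>k. U k n) summable_on UNIV" for n
    using summable_on_SigmaD1[of "\<lambda>n k. U k n", OF Us[unfolded Sigma_def[symmetric]]] by simp
  have i2: "(\<lambda>n. U k n) summable_on UNIV" for k
    using summable_on_SigmaD1[of "\<lambda>k n. U k n", OF Us2] by simp
  have o1: "(\<lambda>n. infsum (\<lambda>k. U k n) UNIV) summable_on UNIV"
    using summable_on_Sigma_banach[of "\<lambda>n k. U k n", OF Us] by simp
  have o2: "(\<lambda>k. infsum (\<lambda>n. U k n) UNIV) summable_on UNIV"
    using summable_on_Sigma_banach[of "\<lambda>k n. U k n", OF Us2] by simp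
  have "(\<Sum>k. \<Sum>n. U k n) = infsum (\<lambda>k. infsum (\<lambda>n. U k n) UNIV) UNIV"
    using i2 o2 by (simp add: infsum_suminf_nat)
  also have "\<dots> = infsum (\<lambda>n. infsum (\<lambda>k. U k n) UNIV) UNIV"
    by (rule infsum_swap_banach) (use Us2 in simp)
  also have "\<dots> = (\<Sum>n. \<Sum>k. U k n)"
    using i1 o1 by (simp add: infsum_suminf_nat)
  finally show ?thesis .
qed



lemma deriv_mono: "deriv (\<lambda>w. c * w ^ j) w = c * of_nat j * w ^ (j - 1)"
  by (rule DERIV_imp_deriv) (auto intro!: derivative_eq_intros)

lemma Delta_mono:
  "Delta \<theta> (\<lambda>w. c * w ^ j) = (\<lambda>w. (c * of_nat j * (of_real \<theta> + of_nat j - 1)) * w ^ (j - 1))"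
proof
  fix w :: complex
  have d1: "deriv (\<lambda>w. c * w ^ j) = (\<lambda>w. (c * of_nat j) * w ^ (j - 1))"
    by (rule ext, subst deriv_mono) simp
  have d2: "deriv (deriv (\<lambda>w. c * w ^ j)) w = (c * of_nat j) * of_nat (j-1) * w ^ (j - 1 - 1)"
    unfolding d1 by (rule deriv_mono)
  show "Delta \<theta> (\<lambda>w. c * w ^ j) w = (c * of_nat j * (of_real \<theta> + of_nat j - 1)) * w ^ (j - 1)"
  proof (cases "j \<ge> 2")
    case True
    then obtain i where j: "j = Suc (Suc i)" by (cases j; cases "j - 1") auto
    show ?thesis unfolding Delta_def d2 deriv_mono j
      by (simp add: algebra_simps)
  next
    case False
    then have "j = 0 \<or> j = 1" by auto
    then show ?thesis unfolding Delta_def d2 deriv_mono by auto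
  qed
qed

definition Ecoef :: "real \<Rightarrow> nat \<Rightarrow> nat \<Rightarrow> real" where
  "Ecoef \<theta> m k = (if k \<le> m then fact m / fact (m - k) * pochhammer (\<theta> + real (m - k)) k else 0)"

lemma Ecoef_Suc: "Ecoef \<theta> m k * real (m - k) * (\<theta> + real (m - k) - 1) = Ecoef \<theta> m (Suc k)"
proof (cases "Suc k \<le> m")
  case True
  define r where "r = m - Suc k"
  have mk: "m - k = Suc r" using True by (simp add: r_def)
  define P where "P = pochhammer (\<theta> + real (Suc r)) k"
  have E1: "Ecoef \<theta> m k = fact m / fact (Suc r) * P"
    using True by (simp add: Ecoef_def mk P_def)
  have E2: "Ecoef \<theta> m (Suc k) = fact m / fact r * ((\<theta> + real r) * P)"
  proof -
    have "pochhammer (\<theta> + real r) (Suc k) = (\<theta> + real r) * P"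
    proof -
      have eq: "\<theta> + real r + 1 = \<theta> + real (Suc r)" by simp
      show ?thesis by (simp only: pochhammer_rec P_def eq)
    qed
    then show ?thesis using True by (simp add: Ecoef_def r_def[symmetric])
  qed
  have "fact (Suc r) = real (Suc r) * (fact r :: real)" by simp
  moreover have "(fact r :: real) \<noteq> 0" "real (Suc r) \<noteq> 0" by auto
  ultimately show ?thesis unfolding E1 E2 mk
    by (simp add: field_simps del: of_nat_Suc) (simp add: algebra_simps)
next
  case False
  then show ?thesis by (auto simp: Ecoef_def)
qed

lemma Delta_pow: "(Delta \<theta> ^^ k) (\<lambda>w. w ^ m) = (\<lambda>w. of_real (Ecoef \<theta> m k) * w ^ (m - k))"
proof (induction k)
  case 0
  then show ?case by (simp add: Ecoef_def)
next
  case (Suc k)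
  have "(Delta \<theta> ^^ Suc k) (\<lambda>w. w ^ m) = Delta \<theta> ((Delta \<theta> ^^ k) (\<lambda>w. w ^ m))" by simp
  also have "\<dots> = (\<lambda>w. of_real (Ecoef \<theta> m k * real (m - k) * (\<theta> + real (m - k) - 1)) * w ^ (m - Suc k))"
    unfolding Suc Delta_mono by (simp add: mult.assoc)
  finally show ?case by (simp add: Ecoef_Suc)
qed

lemma poch_sums:
  fixes x y :: real assumes "0 \<le> y" "y < 1"
  shows "(\<lambda>k. pochhammer x k / fact k * y ^ k) sums (1 - y) powr (- x)"
proof -
  have "(\<lambda>k. ((-x) gchoose k) * (-y) ^ k) sums (1 + (-y)) powr (-x)"
    by (rule gen_binomial_real) (use assms in auto)
  moreover have "((-x) gchoose k) * (-y) ^ k = pochhammer x k / fact k * y ^ k" for k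
  proof -
    have "((-x) gchoose k) * (-y) ^ k = ((-1) ^ k * (-1) ^ k) * (pochhammer x k / fact k * y ^ k)"
      unfolding gbinomial_pochhammer power_minus[of y] minus_minus by (simp only: ac_simps times_divide_eq_right)
    then show ?thesis by simp
  qed
  ultimately show ?thesis by simp
qed



lemma Bspace_bound:
  assumes "g \<in> Bspace r" "r > 0"
  shows "cmod ((deriv ^^ k) g 0) \<le> Bnorm r g * r ^ k" "0 \<le> Bnorm r g"
proof -
  have bdd: "bdd_above (range (Bseqw r g))" using assms(1) by (simp add: Bspace_def)
  have le: "Bseqw r g k \<le> Bnorm r g" for k
    unfolding Bnorm_def by (rule cSUP_upper[OF _ bdd]) simp
  have "cmod ((deriv ^^ k) g 0) = r ^ k * Bseqw r g k"
    using assms(2) by (simp add: Bseqw_def power_inverse field_simps)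
  also have "\<dots> \<le> r ^ k * Bnorm r g" using le assms(2) by (intro mult_left_mono) auto
  finally show "cmod ((deriv ^^ k) g 0) \<le> Bnorm r g * r ^ k" by (simp add: mult.commute)
  have "0 \<le> Bseqw r g 0" by (simp add: Bseqw_def)
  then show "0 \<le> Bnorm r g" using le[of 0] by linarith
qed



theorem proposition1p4:
  fixes a b \<theta> :: real and \<phi> f :: "complex \<Rightarrow> complex"
  assumes "a > 0" and "b > 0" and "a * b < 1"
    and "\<phi> \<in> Bspace a" and "f \<in> Bspace b" and "\<theta> \<ge> 0"
  shows "funcalc \<theta> \<phi> f \<in> Bspace (b / (1 - a * b))
    \<and> Bnorm (b / (1 - a * b)) (funcalc \<theta> \<phi> f)
        \<le> (1 - a * b) powr (- \<theta>) * Bnorm a \<phi> * Bnorm b f"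
proof -
  define A where "A = Bnorm a \<phi>"
  define F where "F = Bnorm b f"
  define c where "c = b / (1 - a * b)"
  define K where "K = (1 - a * b) powr (- \<theta>) * A * F"
  define C where "C k n = (deriv ^^ k) \<phi> 0 / fact k * ((deriv ^^ (n + k)) f 0 / fact (n + k))
      * complex_of_real (Ecoef \<theta> (n + k) k)" for k n
  define B where "B k n = A * F * b ^ n / fact n * (pochhammer (\<theta> + real n) k / fact k * (a * b) ^ k)" for k n
  define Bs where "Bs n = K * c ^ n / fact n" for n
  define s where "s n = (\<Sum>k. C k n)" for n
  have ab: "0 \<le> a * b" "a * b < 1" using assms by auto
  have c0: "c > 0" using assms by (simp add: c_def)
  have pA: "cmod ((deriv ^^ k) \<phi> 0) \<le> A * a ^ k" for k
    using Bspace_bound[OF assms(4,1)] by (simp add: A_def)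
  have A0: "0 \<le> A" using Bspace_bound[OF assms(4,1)] by (simp add: A_def)
  have pF: "cmod ((deriv ^^ k) f 0) \<le> F * b ^ k" for k
    using Bspace_bound[OF assms(5,2)] by (simp add: F_def)
  have F0: "0 \<le> F" using Bspace_bound[OF assms(5,2)] by (simp add: F_def)
  have poch_nn: "0 \<le> pochhammer (\<theta> + real n) k" for n k
    unfolding pochhammer_prod by (rule prod_nonneg) (use assms in auto)
  have CB: "norm (C k n) \<le> B k n" for k n
  proof -
    have E: "Ecoef \<theta> (n + k) k = fact (n + k) / fact n * pochhammer (\<theta> + real n) k"
      by (simp add: Ecoef_def)
    have "norm (C k n) = cmod ((deriv ^^ k) \<phi> 0) / fact k * (cmod ((deriv ^^ (n + k)) f 0) / fact (n + k))
          * (fact (n + k) / fact n * pochhammer (\<theta> + real n) k)"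
      unfolding C_def E using poch_nn[of n k] by (simp add: norm_mult norm_divide)
    also have "\<dots> \<le> (A * a ^ k) / fact k * ((F * b ^ (n + k)) / fact (n + k))
          * (fact (n + k) / fact n * pochhammer (\<theta> + real n) k)"
      using pA[of k] pF[of "n + k"] poch_nn[of n k] A0 F0 assms(1,2)
      by (intro mult_right_mono mult_mono divide_right_mono) auto
    also have "\<dots> = B k n"
      by (simp add: B_def power_add power_mult_distrib field_simps)
    finally show ?thesis .
  qed
  have Bsums: "(\<lambda>k. B k n) sums Bs n" for n
  proof -
    have "(\<lambda>k. pochhammer (\<theta> + real n) k / fact k * (a * b) ^ k) sums (1 - a * b) powr (- (\<theta> + real n))"
      by (rule poch_sums) (use ab in auto)
    then have "(\<lambda>k. A * F * b ^ n / fact n * (pochhammer (\<theta> + real n) k / fact k * (a * b) ^ k))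
        sums (A * F * b ^ n / fact n * (1 - a * b) powr (- (\<theta> + real n)))"
      by (rule sums_mult)
    moreover have "A * F * b ^ n / fact n * (1 - a * b) powr (- (\<theta> + real n)) = Bs n"
    proof -
      have "(1 - a * b) powr (- (\<theta> + real n)) = (1 - a * b) powr (- \<theta>) / (1 - a * b) ^ n"
      proof -
        have x0: "0 < 1 - a * b" using ab by simp
        have "(1 - a * b) powr (- (\<theta> + real n)) = (1 - a * b) powr (- \<theta> - real n)" by simp
        also have "\<dots> = (1 - a * b) powr (- \<theta>) / (1 - a * b) powr (real n)" by (rule powr_diff)
        also have "\<dots> = (1 - a * b) powr (- \<theta>) / (1 - a * b) ^ n" using x0 by (simp add: powr_realpow)
        finally show ?thesis .
      qed
      then show ?thesis by (simp add: Bs_def K_def c_def power_divide mult_ac)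
    qed
    ultimately show ?thesis by (simp add: B_def)
  qed
  have B0: "0 \<le> B k n" for k n using CB[of k n] norm_ge_zero order_trans by blast
  have Csum: "summable (\<lambda>k. C k n)" for n
    by (rule summable_comparison_test'[OF sums_summable[OF Bsums[of n]]]) (use CB in auto)
  have sB: "norm (s n) \<le> Bs n" for n
  proof -
    have sn: "summable (\<lambda>k. norm (C k n))"
      by (rule summable_comparison_test'[OF sums_summable[OF Bsums[of n]]]) (use CB in auto)
    have "norm (s n) \<le> (\<Sum>k. norm (C k n))" unfolding s_def by (rule summable_norm[OF sn])
    also have "\<dots> \<le> (\<Sum>k. B k n)" by (rule suminf_le[OF CB sn sums_summable[OF Bsums[of n]]])
    also have "\<dots> = Bs n" using Bsums[of n] by (simp add: sums_iff)
    finally show ?thesis .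
  qed
  have Wsum: "summable (\<lambda>n. Bs n * r ^ n)" for r
  proof -
    have "summable (\<lambda>n. K * (inverse (fact n) * (c * r) ^ n))"
      by (intro summable_mult summable_exp)
    moreover have "K * (inverse (fact n) * (c * r) ^ n) = Bs n * r ^ n" for n
      by (simp add: Bs_def power_mult_distrib divide_inverse)
    ultimately show ?thesis by simp
  qed
  have g_eq: "funcalc \<theta> \<phi> f z = (\<Sum>n. s n * z ^ n)" for z
  proof -
    have inner: "(\<Sum>m. (deriv ^^ k) \<phi> 0 / fact k * ((deriv ^^ m) f 0 / fact m) * (Delta \<theta> ^^ k) (\<lambda>w. w ^ m) z)
        = (\<Sum>n. C k n * z ^ n)" for k
    proof -
      define T where "T m = (deriv ^^ k) \<phi> 0 / fact k * ((deriv ^^ m) f 0 / fact m) * (Delta \<theta> ^^ k) (\<lambda>w. w ^ m) z" for m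
      have "T m = 0" if "m < k" for m using that by (simp add: T_def Delta_pow Ecoef_def)
      then have "(\<lambda>i. T (i + k)) sums S \<longleftrightarrow> T sums S" for S by (rule sums_zero_iff_shift)
      then have "suminf T = suminf (\<lambda>i. T (i + k))" by (simp add: suminf_def)
      also have "(\<lambda>i. T (i + k)) = (\<lambda>n. C k n * z ^ n)"
        by (rule ext) (simp add: T_def Delta_pow C_def mult_ac)
      finally show ?thesis by (simp add: T_def)
    qed
    have "funcalc \<theta> \<phi> f z = (\<Sum>k. \<Sum>n. C k n * z ^ n)"
      unfolding funcalc_def by (simp only: inner)
    also have "\<dots> = (\<Sum>n. \<Sum>k. C k n * z ^ n)"
    proof (rule swap_suminf)
      show "norm (C k n * z ^ n) \<le> B k n * norm z ^ n" for k n
        by (simp add: norm_mult norm_power mult_right_mono CB)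
      show "(\<lambda>k. B k n * norm z ^ n) sums (Bs n * norm z ^ n)" for n
        by (rule sums_mult2[OF Bsums])
      show "summable (\<lambda>n. Bs n * norm z ^ n)" by (rule Wsum)
    qed
    also have "\<dots> = (\<Sum>n. s n * z ^ n)"
      unfolding s_def by (simp add: suminf_mult2[OF Csum])
    finally show ?thesis .
  qed
  define S where "S = Abs_fps s"
  have geq: "funcalc \<theta> \<phi> f = eval_fps S"
    by (rule ext) (simp add: g_eq eval_fps_def S_def)
  have rad: "fps_conv_radius S = \<infinity>"
    unfolding fps_conv_radius_def
  proof (rule conv_radius_inftyI'')
    fix z :: complex
    show "summable (\<lambda>n. fps_nth S n * z ^ n)"
    proof (rule summable_comparison_test'[OF Wsum[of "norm z"]])
      show "norm (fps_nth S n * z ^ n) \<le> Bs n * norm z ^ n" for n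
        by (simp add: S_def norm_mult norm_power mult_right_mono sB)
    qed
  qed
  have ent: "entire (funcalc \<theta> \<phi> f)"
    unfolding entire_def geq by (rule holomorphic_on_eval_fps) (simp add: rad)
  have dn: "(deriv ^^ n) (funcalc \<theta> \<phi> f) 0 = fact n * s n" for n
  proof -
    have "fps_nth S n = (deriv ^^ n) (eval_fps S) 0 / fact n"
      by (rule fps_nth_conv_deriv) (simp add: rad)
    then show ?thesis by (simp add: geq S_def field_simps)
  qed
  have bnd: "Bseqw c (funcalc \<theta> \<phi> f) n \<le> K" for n
  proof -
    have "Bseqw c (funcalc \<theta> \<phi> f) n = inverse c ^ n * (fact n * norm (s n))"
      by (simp add: Bseqw_def dn norm_mult)
    also have "\<dots> \<le> inverse c ^ n * (fact n * Bs n)"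
      using sB c0 by (intro mult_left_mono) auto
    also have "\<dots> = K" using c0 by (simp add: Bs_def power_inverse field_simps)
    finally show ?thesis .
  qed
  have bdd: "bdd_above (range (Bseqw c (funcalc \<theta> \<phi> f)))"
    using bnd by (intro bdd_aboveI[of _ K]) auto
  have "Bnorm c (funcalc \<theta> \<phi> f) \<le> K"
    unfolding Bnorm_def by (rule cSUP_least) (use bnd in auto)
  then show ?thesis using ent bdd
    by (simp add: Bspace_def c_def K_def A_def F_def)
qed

end
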